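(* Let $\alpha\ge0$, $\rho\in\mathcal{R}_\alpha$, and $L_\rho(x):=x^\alpha\rho(x)$. Assume further that for every $\eta>0$ the function $x\mapsto x^\eta L_\rho(x)$ is eventually increasing and $x\mapsto x^{-\eta}L_\rho(x)$ is eventually decreasing. Then: (a) If $0\le\alpha<1$, $$\lim_{b\to\infty}\sup_{a\in[0,b)}\Big|\frac{I_\rho(b)-I_\rho(a)}{L_\rho(b)(b^{1-\alpha}-a^{1-\alpha})}-\frac1{1-\alpha}\Big|=0.$$ (b) If $\alpha>1$, $$\lim_{b\to\infty}\sup_{a\in(b,\infty)}\Big|\frac{I_\rho(a)-I_\rho(b)}{L_\rho(b)(b^{1-\alpha}-a^{1-\alpha})}-\frac1{\alpha-1}\Big|=0.$$
   Context: For $\alpha\ge0$, $\mathcal{R}_\alpha$ denotes the set of measurable functions $\rho:[0,\infty)\to(0,1]$ that are regularly varying of order $-\alpha$, i.e. $\lim_{t\to\infty}\rho(\lambda t)/\rho(t)=\lambda^{-\alpha}$ for every $\lambda>0$. $I_\rho(t):=\int_0^t\rho(s)ds$. *)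

theory Defs
  imports "HOL-Analysis.Analysis"
begin

definition regvar :: "real \<Rightarrow> (real \<Rightarrow> real) \<Rightarrow> bool" where
  "regvar \<alpha> \<rho> \<longleftrightarrow> set_borel_measurable borel {0..} \<rho> \<and> (\<forall>t\<ge>0. 0 < \<rho> t \<and> \<rho> t \<le> 1) \<and>
     (\<forall>c>0. ((\<lambda>t. \<rho> (c * t) / \<rho> t) \<longlongrightarrow> c powr (-\<alpha>)) at_top)"

definition Irho :: "(real \<Rightarrow> real) \<Rightarrow> real \<Rightarrow> real" where
  "Irho \<rho> t = (LINT s:{0..t}|lborel. \<rho> s)"

definition Lrho :: "real \<Rightarrow> (real \<Rightarrow> real) \<Rightarrow> real \<Rightarrow> real" where
  "Lrho \<alpha> \<rho> x = x powr \<alpha> * \<rho> x"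

definition ev_incr :: "(real \<Rightarrow> real) \<Rightarrow> bool" where
  "ev_incr f \<longleftrightarrow> (\<exists>x0. \<forall>x y. x0 \<le> x \<longrightarrow> x \<le> y \<longrightarrow> f x \<le> f y)"

definition ev_decr :: "(real \<Rightarrow> real) \<Rightarrow> bool" where
  "ev_decr f \<longleftrightarrow> (\<exists>x0. \<forall>x y. x0 \<le> x \<longrightarrow> x \<le> y \<longrightarrow> f y \<le> f x)"

end

theory Submission
  imports Defs
begin

lemma rho_integrable:
  assumes "regvar \<alpha> \<rho>" "t \<ge> 0"
  shows "set_integrable lborel {0..t} \<rho>"
proof -
  have m: "(\<lambda>x. indicator {0..} x *\<^sub>R \<rho> x) \<in> borel_measurable borel"
    using assms(1) unfolding regvar_def set_borel_measurable_def by auto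
  have eq: "(\<lambda>x. indicator {0..t} x *\<^sub>R \<rho> x) = (\<lambda>x. indicator {0..t} x * (indicator {0..} x *\<^sub>R \<rho> x))"
    by (auto simp: indicator_def fun_eq_iff)
  have b: "\<forall>s\<ge>0. 0 < \<rho> s \<and> \<rho> s \<le> 1" using assms(1) unfolding regvar_def by auto
  show ?thesis unfolding set_integrable_def
  proof (rule Bochner_Integration.integrable_bound)
    show "integrable lborel (indicator {0..t} :: real \<Rightarrow> real)" by (rule integrable_real_indicator) (auto simp: emeasure_lborel_Icc_eq)
    show "(\<lambda>x. indicator {0..t} x *\<^sub>R \<rho> x) \<in> borel_measurable lborel"
      unfolding eq using m by simp
    show "AE x in lborel. norm (indicator {0..t} x *\<^sub>R \<rho> x) \<le> norm (indicator {0..t} x :: real)"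
      using b by (intro AE_I2) (auto simp: indicator_def)
  qed
qed

lemma Irho_eq:
  assumes "regvar \<alpha> \<rho>" "t \<ge> 0"
  shows "Irho \<rho> t = integral {0..t} \<rho>" "\<rho> integrable_on {0..t}"
  using set_borel_integral_eq_integral[OF rho_integrable[OF assms]] unfolding Irho_def by auto

lemma Irho_diff:
  assumes "regvar \<alpha> \<rho>" "0 \<le> a" "a \<le> b"
  shows "Irho \<rho> b - Irho \<rho> a = integral {a..b} \<rho>" "\<rho> integrable_on {a..b}"
proof -
  have i: "\<rho> integrable_on {0..b}" using Irho_eq assms by auto
  show "Irho \<rho> b - Irho \<rho> a = integral {a..b} \<rho>"
    using Irho_eq(1)[OF assms(1)] Henstock_Kurzweil_Integration.integral_combine[OF assms(2,3) i] assms by auto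
  show "\<rho> integrable_on {a..b}"
    by (rule integrable_on_subinterval[OF i]) (use assms in auto)
qed

lemma powr_has_integral:
  fixes p a b :: real
  assumes "0 < a" "a \<le> b" "p \<noteq> -1"
  shows "((\<lambda>s. s powr p) has_integral (b powr (p+1) - a powr (p+1)) / (p+1)) {a..b}"
proof -
  have "((\<lambda>s. s powr p) has_integral (\<lambda>s. s powr (p+1) / (p+1)) b - (\<lambda>s. s powr (p+1) / (p+1)) a) {a..b}"
  proof (rule fundamental_theorem_of_calculus[OF assms(2)])
    fix x assume x: "x \<in> {a..b}"
    hence "x > 0" using assms by auto
    have "((\<lambda>s. s powr (p+1) / (p+1)) has_real_derivative ((p+1) * x powr (p+1-1)) / (p+1)) (at x)"
      by (intro derivative_intros DERIV_cdivide has_real_derivative_powr) (use \<open>x>0\<close> in auto)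
    moreover have "((p+1) * x powr (p+1-1)) / (p+1) = x powr p" using assms by auto
    ultimately show "((\<lambda>s. s powr (p+1) / (p+1)) has_vector_derivative x powr p) (at x within {a..b})"
      by (auto simp: has_real_derivative_iff_has_vector_derivative[symmetric] intro: has_field_derivative_at_within)
  qed
  thus ?thesis by (simp add: diff_divide_distrib)
qed


lemma sup_tendsto0:
  fixes f :: "real \<Rightarrow> real \<Rightarrow> real" and S :: "real \<Rightarrow> real set"
  assumes nn: "\<And>b a. 0 \<le> f b a"
    and ev: "\<And>\<epsilon>. \<epsilon> > 0 \<Longrightarrow> eventually (\<lambda>b. S b \<noteq> {} \<and> (\<forall>a\<in>S b. f b a \<le> \<epsilon>)) at_top"
  shows "((\<lambda>b. SUP a\<in>S b. ereal (f b a)) \<longlongrightarrow> 0) at_top"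
proof (rule order_tendstoI)
  fix l :: ereal assume l: "l < 0"
  show "eventually (\<lambda>b. l < (SUP a\<in>S b. ereal (f b a))) at_top"
    using ev[of 1, OF zero_less_one]
  proof eventually_elim
    case (elim b)
    then obtain a where a: "a \<in> S b" by auto
    have "l < ereal (f b a)" using l nn[of b a] by (meson ereal_less_eq(5) order_less_le_trans)
    also have "\<dots> \<le> (SUP a\<in>S b. ereal (f b a))" using a by (rule SUP_upper)
    finally show ?case .
  qed
next
  fix u :: ereal assume u: "0 < u"
  obtain z where z: "0 < ereal z" "ereal z < u" using ereal_dense2[OF u] by auto
  hence zp: "z > 0" by simp
  show "eventually (\<lambda>b. (SUP a\<in>S b. ereal (f b a)) < u) at_top"
    using ev[of "z/2", OF half_gt_zero[OF zp]]
  proof eventually_elim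
    case (elim b)
    have "(SUP a\<in>S b. ereal (f b a)) \<le> ereal (z/2)"
      using elim by (intro SUP_least) auto
    also have "\<dots> < ereal z" using zp by simp
    finally show ?case using z(2) by simp
  qed
qed

lemma choose_eta:
  fixes c \<epsilon> :: real
  assumes "c > 0" "\<epsilon> > 0"
  shows "\<exists>\<eta>>0. \<eta> < c/2 \<and> 1/(c-\<eta>) \<le> 1/c + \<epsilon> \<and> 1/c - \<epsilon> \<le> 1/(c+\<eta>)"
proof -
  have t1: "((\<lambda>\<eta>. 1/(c-\<eta>)) \<longlongrightarrow> 1/(c-0)) (at_right 0)"
    using assms by (intro tendsto_intros) auto
  have t2: "((\<lambda>\<eta>. 1/(c+\<eta>)) \<longlongrightarrow> 1/(c+0)) (at_right 0)"
    using assms by (intro tendsto_intros) auto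
  have e1: "eventually (\<lambda>\<eta>. dist (1/(c-\<eta>)) (1/c) < \<epsilon>) (at_right 0)"
    using tendstoD[OF t1 assms(2)] by simp
  have e2: "eventually (\<lambda>\<eta>. dist (1/(c+\<eta>)) (1/c) < \<epsilon>) (at_right 0)"
    using tendstoD[OF t2 assms(2)] by simp
  have e3: "eventually (\<lambda>\<eta>. \<eta> \<in> {0<..<c/2}) (at_right (0::real))"
    using assms by (intro eventually_at_right_real) auto
  have "eventually (\<lambda>\<eta>. \<eta>>0 \<and> \<eta> < c/2 \<and> 1/(c-\<eta>) \<le> 1/c + \<epsilon> \<and> 1/c - \<epsilon> \<le> 1/(c+\<eta>)) (at_right 0)"
    using e1 e2 e3 by eventually_elim (auto simp: dist_real_def abs_less_iff)
  from eventually_happens'[OF _ this] show ?thesis by auto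
qed

lemma get_x0:
  fixes \<alpha> \<eta> :: real
  assumes H: "\<forall>\<eta>>0. ev_incr (\<lambda>x. x powr \<eta> * Lrho \<alpha> \<rho> x) \<and> ev_decr (\<lambda>x. x powr (-\<eta>) * Lrho \<alpha> \<rho> x)"
    and "\<eta> > 0"
  shows "\<exists>x0>0. (\<forall>x y. x0\<le>x \<longrightarrow> x\<le>y \<longrightarrow> x powr (\<eta>+\<alpha>) * \<rho> x \<le> y powr (\<eta>+\<alpha>) * \<rho> y) \<and>
                 (\<forall>x y. x0\<le>x \<longrightarrow> x\<le>y \<longrightarrow> y powr (\<alpha>-\<eta>) * \<rho> y \<le> x powr (\<alpha>-\<eta>) * \<rho> x)"
proof -
  obtain x1 where x1: "\<forall>x y. x1 \<le> x \<longrightarrow> x \<le> y \<longrightarrow> x powr \<eta> * Lrho \<alpha> \<rho> x \<le> y powr \<eta> * Lrho \<alpha> \<rho> y"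
    using H assms(2) unfolding ev_incr_def by blast
  obtain x2 where x2: "\<forall>x y. x2 \<le> x \<longrightarrow> x \<le> y \<longrightarrow> y powr (-\<eta>) * Lrho \<alpha> \<rho> y \<le> x powr (-\<eta>) * Lrho \<alpha> \<rho> x"
    using H assms(2) unfolding ev_decr_def by blast
  define x0 where "x0 = max 1 (max x1 x2)"
  have c1: "x powr \<eta> * Lrho \<alpha> \<rho> x = x powr (\<eta>+\<alpha>) * \<rho> x" if "x > 0" for x
    using that by (simp add: Lrho_def powr_add)
  have c2: "x powr (-\<eta>) * Lrho \<alpha> \<rho> x = x powr (\<alpha>-\<eta>) * \<rho> x" if "x > 0" for x
    using that by (simp add: Lrho_def powr_add[symmetric])
  show ?thesis
  proof (intro exI[of _ x0] conjI allI impI)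
    show "x0 > 0" unfolding x0_def by simp
    fix x y assume "x0 \<le> x" "x \<le> y"
    hence "x > 0" "y > 0" "x1 \<le> x" "x2 \<le> x" unfolding x0_def by auto
    thus "x powr (\<eta>+\<alpha>) * \<rho> x \<le> y powr (\<eta>+\<alpha>) * \<rho> y"
      using x1 \<open>x \<le> y\<close> c1 by metis
    show "y powr (\<alpha>-\<eta>) * \<rho> y \<le> x powr (\<alpha>-\<eta>) * \<rho> x"
      using x2 \<open>x \<le> y\<close> c2 \<open>x > 0\<close> \<open>y > 0\<close> \<open>x2 \<le> x\<close> by metis
  qed
qed

lemma alg_id:
  fixes a b q :: real
  assumes "a > 0" "b > 0"
  shows "b powr (1-q) * (b powr q - a powr q) = b * (1 - (a/b) powr q)"
proof -
  have "b powr (1-q) * b powr q = b" using assms by (simp add: powr_add[symmetric])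
  moreover have "a powr q = b powr q * (a/b) powr q" using assms by (simp add: powr_divide)
  ultimately show ?thesis by (simp add: algebra_simps)
qed

lemma int_upper:
  fixes u v q K b :: real
  assumes "0 < u" "u \<le> v" "q \<noteq> 0" "\<rho> integrable_on {u..v}"
    and "\<forall>s\<in>{u..v}. \<rho> s \<le> K * s powr (q-1)"
  shows "integral {u..v} \<rho> \<le> K * ((v powr q - u powr q)/q)"
proof -
  have h: "((\<lambda>s. s powr (q-1)) has_integral (v powr (q-1+1) - u powr (q-1+1)) / (q-1+1)) {u..v}"
    using powr_has_integral[OF assms(1,2), of "q-1"] assms(3) by auto
  have "((\<lambda>s. K * s powr (q-1)) has_integral K * ((v powr q - u powr q)/q)) {u..v}"
    using has_integral_mult_right[OF h] by simp
  thus ?thesis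
    using assms(4,5) by (intro has_integral_le[OF integrable_integral[OF assms(4)]]) auto
qed

lemma int_lower:
  fixes u v q K b :: real
  assumes "0 < u" "u \<le> v" "q \<noteq> 0" "\<rho> integrable_on {u..v}"
    and "\<forall>s\<in>{u..v}. K * s powr (q-1) \<le> \<rho> s"
  shows "K * ((v powr q - u powr q)/q) \<le> integral {u..v} \<rho>"
proof -
  have h: "((\<lambda>s. s powr (q-1)) has_integral (v powr (q-1+1) - u powr (q-1+1)) / (q-1+1)) {u..v}"
    using powr_has_integral[OF assms(1,2), of "q-1"] assms(3) by auto
  have "((\<lambda>s. K * s powr (q-1)) has_integral K * ((v powr q - u powr q)/q)) {u..v}"
    using has_integral_mult_right[OF h] by simp
  thus ?thesis
    using assms(4,5) by (intro has_integral_le[OF _ integrable_integral[OF assms(4)]]) auto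
qed


lemma D_id:
  assumes "0 \<le> a" "0 < b"
  shows "Lrho \<alpha> \<rho> b * (b powr (1-\<alpha>) - a powr (1-\<alpha>)) = \<rho> b * b * (1 - (a/b) powr (1-\<alpha>))"
proof (cases "a = 0")
  case True
  thus ?thesis using assms by (simp add: Lrho_def powr_add[symmetric])
next
  case False
  hence "a > 0" using assms by simp
  from alg_id[OF this assms(2), of "1-\<alpha>"]
  have e: "b powr \<alpha> * (b powr (1-\<alpha>) - a powr (1-\<alpha>)) = b * (1 - (a/b) powr (1-\<alpha>))" by simp
  have "Lrho \<alpha> \<rho> b * (b powr (1-\<alpha>) - a powr (1-\<alpha>)) = \<rho> b * (b powr \<alpha> * (b powr (1-\<alpha>) - a powr (1-\<alpha>)))"
    by (simp add: Lrho_def mult_ac)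
  thus ?thesis using e by simp
qed

lemma est_a:
  fixes \<alpha> \<eta> x0 a b :: real
  assumes reg: "regvar \<alpha> \<rho>" and eta: "0 < \<eta>" "\<eta> < 1-\<alpha>" and x0: "x0 > 0"
    and inc: "\<forall>x y. x0\<le>x \<longrightarrow> x\<le>y \<longrightarrow> x powr (\<eta>+\<alpha>) * \<rho> x \<le> y powr (\<eta>+\<alpha>) * \<rho> y"
    and dec: "\<forall>x y. x0\<le>x \<longrightarrow> x\<le>y \<longrightarrow> y powr (\<alpha>-\<eta>) * \<rho> y \<le> x powr (\<alpha>-\<eta>) * \<rho> x"
    and ab: "x0 \<le> a" "a < b"
  shows "\<rho> b * b * (1 - (a/b) powr (1-\<alpha>)) / (1-\<alpha>+\<eta>) \<le> Irho \<rho> b - Irho \<rho> a"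
    and "Irho \<rho> b - Irho \<rho> a \<le> \<rho> b * b * (1 - (a/b) powr (1-\<alpha>)) / (1-\<alpha>-\<eta>)"
proof -
  have a0: "a > 0" "b > 0" using x0 ab by auto
  have rb: "\<rho> b > 0" using reg a0 unfolding regvar_def by auto
  have N: "Irho \<rho> b - Irho \<rho> a = integral {a..b} \<rho>" and I: "\<rho> integrable_on {a..b}"
    using Irho_diff[OF reg, of a b] a0 ab by auto
  have t01: "0 \<le> a/b" "a/b \<le> 1" using a0 ab by auto
  have pb: "0 < \<rho> b * b" using rb a0 by simp
  define q where "q = 1-\<alpha>-\<eta>"
  have q: "q > 0" "1 - q = \<eta>+\<alpha>" using eta unfolding q_def by auto
  have pw: "\<forall>s\<in>{a..b}. \<rho> s \<le> (\<rho> b * b powr (\<eta>+\<alpha>)) * s powr (q-1)"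
  proof
    fix s assume s: "s \<in> {a..b}"
    hence sp: "s > 0" using a0 by auto
    have "\<eta>+\<alpha>+(q-1) = 0" using q by simp
    hence "s powr (\<eta>+\<alpha>) * s powr (q-1) = 1" using sp by (simp add: powr_add[symmetric])
    hence "\<rho> s = (s powr (\<eta>+\<alpha>) * \<rho> s) * s powr (q-1)" by (metis mult.assoc mult.commute mult_1)
    also have "\<dots> \<le> (b powr (\<eta>+\<alpha>) * \<rho> b) * s powr (q-1)"
      using inc s ab by (intro mult_right_mono) auto
    finally show "\<rho> s \<le> (\<rho> b * b powr (\<eta>+\<alpha>)) * s powr (q-1)" by (simp add: mult.commute)
  qed
  have "integral {a..b} \<rho> \<le> (\<rho> b * b powr (\<eta>+\<alpha>)) * ((b powr q - a powr q)/q)"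
    using int_upper[OF a0(1) _ _ I pw] ab q by auto
  also have "\<dots> = \<rho> b * (b powr (1-q) * (b powr q - a powr q)) / q" using q by simp
  also have "\<dots> = \<rho> b * b * (1 - (a/b) powr q) / q" using alg_id[OF a0, of q] by simp
  also have "\<dots> \<le> \<rho> b * b * (1 - (a/b) powr (1-\<alpha>)) / q"
  proof -
    have "(a/b) powr (1-\<alpha>) \<le> (a/b) powr q" using powr_mono'[OF _ t01] q unfolding q_def using eta by auto
    thus ?thesis using pb q by (intro divide_right_mono mult_left_mono) auto
  qed
  finally show "Irho \<rho> b - Irho \<rho> a \<le> \<rho> b * b * (1 - (a/b) powr (1-\<alpha>)) / (1-\<alpha>-\<eta>)"
    using N q_def by simp
next
  have a0: "a > 0" "b > 0" using x0 ab by auto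
  have rb: "\<rho> b > 0" using reg a0 unfolding regvar_def by auto
  have N: "Irho \<rho> b - Irho \<rho> a = integral {a..b} \<rho>" and I: "\<rho> integrable_on {a..b}"
    using Irho_diff[OF reg, of a b] a0 ab by auto
  have t01: "0 \<le> a/b" "a/b \<le> 1" using a0 ab by auto
  have pb: "0 < \<rho> b * b" using rb a0 by simp
  define q where "q = 1-\<alpha>+\<eta>"
  have q: "q > 0" "1 - q = \<alpha>-\<eta>" using eta unfolding q_def by auto
  have pw: "\<forall>s\<in>{a..b}. (\<rho> b * b powr (\<alpha>-\<eta>)) * s powr (q-1) \<le> \<rho> s"
  proof
    fix s assume s: "s \<in> {a..b}"
    hence sp: "s > 0" using a0 by auto
    have "\<alpha>-\<eta>+(q-1) = 0" using q by simp
    hence "s powr (\<alpha>-\<eta>) * s powr (q-1) = 1" using sp by (simp add: powr_add[symmetric])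
    hence e: "\<rho> s = (s powr (\<alpha>-\<eta>) * \<rho> s) * s powr (q-1)" by (metis mult.assoc mult.commute mult_1)
    have "(b powr (\<alpha>-\<eta>) * \<rho> b) * s powr (q-1) \<le> (s powr (\<alpha>-\<eta>) * \<rho> s) * s powr (q-1)"
      using dec s ab by (intro mult_right_mono) auto
    hence "(b powr (\<alpha>-\<eta>) * \<rho> b) * s powr (q-1) \<le> \<rho> s" using e by linarith
    thus "(\<rho> b * b powr (\<alpha>-\<eta>)) * s powr (q-1) \<le> \<rho> s" by (simp add: mult.commute)
  qed
  have "\<rho> b * b * (1 - (a/b) powr (1-\<alpha>)) / q \<le> \<rho> b * b * (1 - (a/b) powr q) / q"
  proof -
    have "(a/b) powr q \<le> (a/b) powr (1-\<alpha>)" using powr_mono'[OF _ t01] q unfolding q_def using eta by auto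
    thus ?thesis using pb q by (intro divide_right_mono mult_left_mono) auto
  qed
  also have "\<dots> = \<rho> b * (b powr (1-q) * (b powr q - a powr q)) / q" using alg_id[OF a0, of q] by simp
  also have "\<dots> = (\<rho> b * b powr (\<alpha>-\<eta>)) * ((b powr q - a powr q)/q)" using q by simp
  also have "\<dots> \<le> integral {a..b} \<rho>"
    using int_lower[OF a0(1) _ _ I pw] ab q by auto
  finally show "\<rho> b * b * (1 - (a/b) powr (1-\<alpha>)) / (1-\<alpha>+\<eta>) \<le> Irho \<rho> b - Irho \<rho> a"
    using N q_def by simp
qed


lemma powr_ev_big:
  fixes e K :: real
  assumes "e > 0"
  shows "eventually (\<lambda>b. K \<le> b powr e) at_top"
proof -
  define K' where "K' = max K 1"
  have K': "K' > 0" "K \<le> K'" unfolding K'_def by auto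
  have "((\<lambda>b::real. b powr (-e)) \<longlongrightarrow> 0) at_top"
    using assms by (intro tendsto_neg_powr filterlim_ident) auto
  hence "eventually (\<lambda>b. b powr (-e) < 1/K') at_top"
    using K' by (intro order_tendstoD) auto
  thus ?thesis using eventually_gt_at_top[of 0]
  proof eventually_elim
    case (elim b)
    have "b powr (-e) > 0" using elim by simp
    hence "K' < 1 / b powr (-e)" using elim K' by (simp add: field_simps)
    also have "1 / b powr (-e) = b powr e" by (simp add: powr_minus_divide)
    finally show ?case using K' by simp
  qed
qed


lemma est_b:
  fixes \<alpha> \<eta> x0 a b :: real
  assumes reg: "regvar \<alpha> \<rho>" and eta: "0 < \<eta>" "\<eta> < \<alpha>-1" and x0: "x0 > 0"
    and inc: "\<forall>x y. x0\<le>x \<longrightarrow> x\<le>y \<longrightarrow> x powr (\<eta>+\<alpha>) * \<rho> x \<le> y powr (\<eta>+\<alpha>) * \<rho> y"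
    and dec: "\<forall>x y. x0\<le>x \<longrightarrow> x\<le>y \<longrightarrow> y powr (\<alpha>-\<eta>) * \<rho> y \<le> x powr (\<alpha>-\<eta>) * \<rho> x"
    and ab: "x0 \<le> b" "b < a"
  shows "\<rho> b * b * (1 - (a/b) powr (1-\<alpha>)) / (\<alpha>-1+\<eta>) \<le> Irho \<rho> a - Irho \<rho> b"
    and "Irho \<rho> a - Irho \<rho> b \<le> \<rho> b * b * (1 - (a/b) powr (1-\<alpha>)) / (\<alpha>-1-\<eta>)"
proof -
  have a0: "a > 0" "b > 0" using x0 ab by auto
  have rb: "\<rho> b > 0" using reg a0 unfolding regvar_def by auto
  have N: "Irho \<rho> a - Irho \<rho> b = integral {b..a} \<rho>" and I: "\<rho> integrable_on {b..a}"
    using Irho_diff[OF reg, of b a] a0 ab by auto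
  have t1: "1 \<le> a/b" using a0 ab by auto
  have pb: "0 < \<rho> b * b" using rb a0 by simp
  define q where "q = 1-\<alpha>+\<eta>"
  have q: "q < 0" "1 - q = \<alpha>-\<eta>" using eta unfolding q_def by auto
  have pw: "\<forall>s\<in>{b..a}. \<rho> s \<le> (\<rho> b * b powr (\<alpha>-\<eta>)) * s powr (q-1)"
  proof
    fix s assume s: "s \<in> {b..a}"
    hence sp: "s > 0" using a0 by auto
    have "\<alpha>-\<eta>+(q-1) = 0" using q by simp
    hence "s powr (\<alpha>-\<eta>) * s powr (q-1) = 1" using sp by (simp add: powr_add[symmetric])
    hence "\<rho> s = (s powr (\<alpha>-\<eta>) * \<rho> s) * s powr (q-1)" by (metis mult.assoc mult.commute mult_1)
    also have "\<dots> \<le> (b powr (\<alpha>-\<eta>) * \<rho> b) * s powr (q-1)"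
      using dec s ab by (intro mult_right_mono) auto
    finally show "\<rho> s \<le> (\<rho> b * b powr (\<alpha>-\<eta>)) * s powr (q-1)" by (simp add: mult.commute)
  qed
  have "integral {b..a} \<rho> \<le> (\<rho> b * b powr (\<alpha>-\<eta>)) * ((a powr q - b powr q)/q)"
    using int_upper[OF a0(2) _ _ I pw] ab q by auto
  also have "\<dots> = \<rho> b * (b powr (1-q) * (b powr q - a powr q)) / (-q)"
  proof -
    have bq: "b powr (1-q) = b powr (\<alpha>-\<eta>)" using q by simp
    show ?thesis unfolding bq using q by (simp add: field_simps)
  qed
  also have "\<dots> = \<rho> b * b * (1 - (a/b) powr q) / (-q)" using alg_id[OF a0, of q] by simp
  also have "\<dots> \<le> \<rho> b * b * (1 - (a/b) powr (1-\<alpha>)) / (-q)"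
  proof -
    have "(a/b) powr (1-\<alpha>) \<le> (a/b) powr q" using powr_mono[OF _ t1] unfolding q_def using eta by auto
    thus ?thesis using pb q by (intro divide_right_mono mult_left_mono) auto
  qed
  finally show "Irho \<rho> a - Irho \<rho> b \<le> \<rho> b * b * (1 - (a/b) powr (1-\<alpha>)) / (\<alpha>-1-\<eta>)"
    using N q_def by simp
next
  have a0: "a > 0" "b > 0" using x0 ab by auto
  have rb: "\<rho> b > 0" using reg a0 unfolding regvar_def by auto
  have N: "Irho \<rho> a - Irho \<rho> b = integral {b..a} \<rho>" and I: "\<rho> integrable_on {b..a}"
    using Irho_diff[OF reg, of b a] a0 ab by auto
  have t1: "1 \<le> a/b" using a0 ab by auto
  have pb: "0 < \<rho> b * b" using rb a0 by simp
  define q where "q = 1-\<alpha>-\<eta>"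
  have q: "q < 0" "1 - q = \<eta>+\<alpha>" using eta unfolding q_def by auto
  have pw: "\<forall>s\<in>{b..a}. (\<rho> b * b powr (\<eta>+\<alpha>)) * s powr (q-1) \<le> \<rho> s"
  proof
    fix s assume s: "s \<in> {b..a}"
    hence sp: "s > 0" using a0 by auto
    have "\<eta>+\<alpha>+(q-1) = 0" using q by simp
    hence "s powr (\<eta>+\<alpha>) * s powr (q-1) = 1" using sp by (simp add: powr_add[symmetric])
    hence e: "\<rho> s = (s powr (\<eta>+\<alpha>) * \<rho> s) * s powr (q-1)" by (metis mult.assoc mult.commute mult_1)
    have "(b powr (\<eta>+\<alpha>) * \<rho> b) * s powr (q-1) \<le> (s powr (\<eta>+\<alpha>) * \<rho> s) * s powr (q-1)"
      using inc s ab by (intro mult_right_mono) auto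
    hence "(b powr (\<eta>+\<alpha>) * \<rho> b) * s powr (q-1) \<le> \<rho> s" using e by linarith
    thus "(\<rho> b * b powr (\<eta>+\<alpha>)) * s powr (q-1) \<le> \<rho> s" by (simp add: mult.commute)
  qed
  have "\<rho> b * b * (1 - (a/b) powr (1-\<alpha>)) / (-q) \<le> \<rho> b * b * (1 - (a/b) powr q) / (-q)"
  proof -
    have "(a/b) powr q \<le> (a/b) powr (1-\<alpha>)" using powr_mono[OF _ t1] unfolding q_def using eta by auto
    thus ?thesis using pb q by (intro divide_right_mono mult_left_mono) auto
  qed
  also have "\<dots> = \<rho> b * (b powr (1-q) * (b powr q - a powr q)) / (-q)" using alg_id[OF a0, of q] by simp
  also have "\<dots> = (\<rho> b * b powr (\<eta>+\<alpha>)) * ((a powr q - b powr q)/q)"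
  proof -
    have bq: "b powr (1-q) = b powr (\<eta>+\<alpha>)" using q by simp
    show ?thesis unfolding bq using q by (simp add: field_simps)
  qed
  also have "\<dots> \<le> integral {b..a} \<rho>"
    using int_lower[OF a0(2) _ _ I pw] ab q by auto
  finally have "\<rho> b * b * (1 - (a/b) powr (1-\<alpha>)) / (-q) \<le> integral {b..a} \<rho>" .
  moreover have "-q = \<alpha>-1+\<eta>" unfolding q_def by simp
  ultimately show "\<rho> b * b * (1 - (a/b) powr (1-\<alpha>)) / (\<alpha>-1+\<eta>) \<le> Irho \<rho> a - Irho \<rho> b"
    using N by simp
qed


lemma ratio_bound:
  fixes N D k1 k2 c e :: real
  assumes "D > 0" "D/k2 \<le> N" "N \<le> D/k1" "k1 > 0" "k2 > 0" "1/k1 \<le> c+e" "c-e \<le> 1/k2"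
  shows "\<bar>N/D - c\<bar> \<le> e"
proof -
  have "N/D \<le> 1/k1" using assms(1,3,4) by (simp add: field_simps)
  moreover have "1/k2 \<le> N/D" using assms(1,2,5) by (simp add: field_simps)
  ultimately show ?thesis using assms(6,7) by linarith
qed

lemma part_b:
  fixes \<alpha> :: real
  assumes al: "\<alpha> > 1" and reg: "regvar \<alpha> \<rho>"
    and H: "\<forall>\<eta>>0. ev_incr (\<lambda>x. x powr \<eta> * Lrho \<alpha> \<rho> x) \<and> ev_decr (\<lambda>x. x powr (-\<eta>) * Lrho \<alpha> \<rho> x)"
  shows "((\<lambda>b. SUP a\<in>{b<..}. ereal \<bar>(Irho \<rho> a - Irho \<rho> b) /
              (Lrho \<alpha> \<rho> b * (b powr (1 - \<alpha>) - a powr (1 - \<alpha>))) - 1 / (\<alpha> - 1)\<bar>) \<longlongrightarrow> 0) at_top"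
proof (rule sup_tendsto0)
  fix \<epsilon> :: real assume ep: "\<epsilon> > 0"
  obtain \<eta> where eta: "\<eta> > 0" "\<eta> < (\<alpha>-1)/2" "1/((\<alpha>-1)-\<eta>) \<le> 1/(\<alpha>-1) + \<epsilon>" "1/(\<alpha>-1) - \<epsilon> \<le> 1/((\<alpha>-1)+\<eta>)"
    using choose_eta[of "\<alpha>-1" \<epsilon>] al ep by auto
  obtain x0 where x0: "x0 > 0"
    and inc: "\<forall>x y. x0\<le>x \<longrightarrow> x\<le>y \<longrightarrow> x powr (\<eta>+\<alpha>) * \<rho> x \<le> y powr (\<eta>+\<alpha>) * \<rho> y"
    and dec: "\<forall>x y. x0\<le>x \<longrightarrow> x\<le>y \<longrightarrow> y powr (\<alpha>-\<eta>) * \<rho> y \<le> x powr (\<alpha>-\<eta>) * \<rho> x"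
    using get_x0[OF H eta(1)] by blast
  show "eventually (\<lambda>b. {b<..} \<noteq> {} \<and> (\<forall>a\<in>{b<..}. \<bar>(Irho \<rho> a - Irho \<rho> b) /
              (Lrho \<alpha> \<rho> b * (b powr (1 - \<alpha>) - a powr (1 - \<alpha>))) - 1 / (\<alpha> - 1)\<bar> \<le> \<epsilon>)) at_top"
    using eventually_ge_at_top[of x0]
  proof eventually_elim
    case (elim b)
    have bp: "b > 0" using elim x0 by simp
    have rb: "\<rho> b > 0" using reg bp unfolding regvar_def by auto
    have "\<forall>a\<in>{b<..}. \<bar>(Irho \<rho> a - Irho \<rho> b) /
              (Lrho \<alpha> \<rho> b * (b powr (1 - \<alpha>) - a powr (1 - \<alpha>))) - 1 / (\<alpha> - 1)\<bar> \<le> \<epsilon>"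
    proof
      fix a assume a: "a \<in> {b<..}"
      hence ab: "b < a" by simp
      have De: "Lrho \<alpha> \<rho> b * (b powr (1 - \<alpha>) - a powr (1 - \<alpha>)) = \<rho> b * b * (1 - (a/b) powr (1-\<alpha>))"
        using D_id[of a b] ab bp by simp
      have "(a/b) powr (1-\<alpha>) < (a/b) powr 0"
        using ab bp al by (subst powr_less_cancel_iff) (auto simp: field_simps)
      hence "(a/b) powr (1-\<alpha>) < 1" using ab bp by simp
      hence Dp: "\<rho> b * b * (1 - (a/b) powr (1-\<alpha>)) > 0" using rb bp by simp
      show "\<bar>(Irho \<rho> a - Irho \<rho> b) /
              (Lrho \<alpha> \<rho> b * (b powr (1 - \<alpha>) - a powr (1 - \<alpha>))) - 1 / (\<alpha> - 1)\<bar> \<le> \<epsilon>"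
        unfolding De
        by (rule ratio_bound[OF Dp est_b(1)[OF reg eta(1) _ x0 inc dec elim ab]
                 est_b(2)[OF reg eta(1) _ x0 inc dec elim ab]])
           (use eta in auto)
    qed
    thus ?case by auto
  qed
qed simp


lemma small_upper:
  fixes D1 Da N1 E x0 k1 :: real
  assumes "0<D1" "D1 \<le> Da" "0 \<le> N1" "0 \<le> E" "E \<le> x0" "N1 \<le> D1/k1" "k1>0"
  shows "(N1+E)/Da \<le> 1/k1 + x0/D1"
proof -
  have "(N1+E)/Da \<le> (N1+E)/D1" using assms by (intro divide_left_mono) auto
  also have "\<dots> = N1/D1 + E/D1" by (simp add: add_divide_distrib)
  also have "N1/D1 \<le> 1/k1" using assms(1,6,7) by (simp add: field_simps)
  also have "E/D1 \<le> x0/D1" using assms by (intro divide_right_mono) auto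
  finally show ?thesis by simp
qed

lemma small_lower:
  fixes M Da N1 E t k2 :: real
  assumes "0<M" "0<Da" "Da \<le> M" "0 \<le> E" "M*(1-t)/k2 \<le> N1" "k2>0" "0 \<le> N1"
  shows "(1-t)/k2 \<le> (N1+E)/Da"
proof -
  have "(1-t)/k2 = (M*(1-t)/k2)/M" using assms(1) by simp
  also have "\<dots> \<le> N1/M" using assms by (intro divide_right_mono) auto
  also have "\<dots> \<le> N1/Da" using assms by (intro divide_left_mono) auto
  also have "\<dots> \<le> (N1+E)/Da" using assms by (intro divide_right_mono) auto
  finally show ?thesis .
qed


lemma part_a:
  fixes \<alpha> :: real
  assumes al0: "\<alpha> \<ge> 0" and al: "\<alpha> < 1" and reg: "regvar \<alpha> \<rho>"
    and H: "\<forall>\<eta>>0. ev_incr (\<lambda>x. x powr \<eta> * Lrho \<alpha> \<rho> x) \<and> ev_decr (\<lambda>x. x powr (-\<eta>) * Lrho \<alpha> \<rho> x)"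
  shows "((\<lambda>b. SUP a\<in>{0..<b}. ereal \<bar>(Irho \<rho> b - Irho \<rho> a) /
              (Lrho \<alpha> \<rho> b * (b powr (1 - \<alpha>) - a powr (1 - \<alpha>))) - 1 / (1 - \<alpha>)\<bar>) \<longlongrightarrow> 0) at_top"
proof (rule sup_tendsto0)
  fix \<epsilon> :: real assume ep: "\<epsilon> > 0"
  define \<gamma> where "\<gamma> = 1 - \<alpha>"
  have gp: "\<gamma> > 0" using al unfolding \<gamma>_def by simp
  obtain \<eta> where eta: "\<eta> > 0" "\<eta> < \<gamma>/2" "1/(\<gamma>-\<eta>) \<le> 1/\<gamma> + \<epsilon>/2" "1/\<gamma> - \<epsilon>/2 \<le> 1/(\<gamma>+\<eta>)"
    using choose_eta[of \<gamma> "\<epsilon>/2"] gp ep by auto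
  obtain x0 where x0: "x0 > 0"
    and inc: "\<forall>x y. x0\<le>x \<longrightarrow> x\<le>y \<longrightarrow> x powr (\<eta>+\<alpha>) * \<rho> x \<le> y powr (\<eta>+\<alpha>) * \<rho> y"
    and dec: "\<forall>x y. x0\<le>x \<longrightarrow> x\<le>y \<longrightarrow> y powr (\<alpha>-\<eta>) * \<rho> y \<le> x powr (\<alpha>-\<eta>) * \<rho> x"
    using get_x0[OF H eta(1)] by blast
  define c where "c = x0 powr (\<eta>+\<alpha>) * \<rho> x0"
  have cp: "c > 0" using reg x0 unfolding c_def regvar_def by auto
  define m where "m = min (1/2) (\<epsilon>*(\<gamma>+\<eta>)/2)"
  have mp: "m > 0" using ep gp eta unfolding m_def by auto
  have E2: "eventually (\<lambda>b. x0 powr \<gamma> / m \<le> b powr \<gamma>) at_top" by (rule powr_ev_big[OF gp])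
  have E3: "eventually (\<lambda>b. 4*x0/(\<epsilon>*c) \<le> b powr (\<gamma>-\<eta>)) at_top" by (rule powr_ev_big) (use eta in auto)
  show "eventually (\<lambda>b. {0..<b} \<noteq> {} \<and> (\<forall>a\<in>{0..<b}. \<bar>(Irho \<rho> b - Irho \<rho> a) /
              (Lrho \<alpha> \<rho> b * (b powr (1 - \<alpha>) - a powr (1 - \<alpha>))) - 1 / (1 - \<alpha>)\<bar> \<le> \<epsilon>)) at_top"
    using eventually_ge_at_top[of "2*x0"] E2 E3
  proof eventually_elim
    case (elim b)
    have bp: "b > 0" and bx: "x0 < b" using elim x0 by auto
    have rb: "\<rho> b > 0" using reg bp unfolding regvar_def by auto
    define M where "M = \<rho> b * b"
    have Mp: "M > 0" unfolding M_def using rb bp by simp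
    define t where "t = (x0/b) powr \<gamma>"
    have t0: "t \<ge> 0" unfolding t_def by simp
    have tm: "t \<le> m"
    proof -
      have "b powr \<gamma> > 0" using bp by simp
      hence "x0 powr \<gamma> \<le> m * b powr \<gamma>" using elim(2) mp by (simp add: field_simps)
      thus ?thesis unfolding t_def using mp \<open>b powr \<gamma> > 0\<close> by (simp add: powr_divide field_simps)
    qed
    have tb: "t \<le> 1/2" "t \<le> \<epsilon>*(\<gamma>+\<eta>)/2" using tm unfolding m_def by auto
    have Mc: "M \<ge> 4*x0/\<epsilon>"
    proof -
      have "c \<le> b powr (\<eta>+\<alpha>) * \<rho> b" using inc bx unfolding c_def by auto
      have e1: "(\<eta>+\<alpha>) + (\<gamma>-\<eta>) = 1" unfolding \<gamma>_def by simp
      have "M = (b powr (\<eta>+\<alpha>) * \<rho> b) * b powr (\<gamma>-\<eta>)"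
      proof -
        have pe: "b powr (\<eta>+\<alpha>) * b powr (\<gamma>-\<eta>) = b" unfolding powr_add[symmetric] e1 using bp by simp
        show ?thesis unfolding M_def by (metis mult.commute mult.left_commute pe)
      qed
      also have "\<dots> \<ge> c * b powr (\<gamma>-\<eta>)"
        using \<open>c \<le> _\<close> by (intro mult_right_mono) auto
      finally have "c * b powr (\<gamma>-\<eta>) \<le> M" .
      moreover have "4*x0/\<epsilon> \<le> c * b powr (\<gamma>-\<eta>)" using elim(3) cp ep by (simp add: field_simps)
      ultimately show ?thesis by linarith
    qed
    define D1 where "D1 = M * (1 - t)"
    have D1b: "D1 \<ge> M/2" unfolding D1_def using tb Mp by (simp add: field_simps)
    have D1p: "D1 > 0" using D1b Mp by simp
    have xD: "x0/D1 \<le> \<epsilon>/2"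
    proof -
      have "2*x0/\<epsilon> = (4*x0/\<epsilon>)/2" by simp
      also have "\<dots> \<le> M/2" using Mc by simp
      finally have "2*x0/\<epsilon> \<le> D1" using D1b by linarith
      thus ?thesis using D1p ep by (simp add: field_simps)
    qed
    have "\<forall>a\<in>{0..<b}. \<bar>(Irho \<rho> b - Irho \<rho> a) /
              (Lrho \<alpha> \<rho> b * (b powr (1 - \<alpha>) - a powr (1 - \<alpha>))) - 1 / (1 - \<alpha>)\<bar> \<le> \<epsilon>"
    proof
      fix a assume a: "a \<in> {0..<b}"
      hence a0: "0 \<le> a" "a < b" by auto
      have De: "Lrho \<alpha> \<rho> b * (b powr \<gamma> - a powr \<gamma>) = M * (1 - (a/b) powr \<gamma>)"
        using D_id[of a b] a0 bp unfolding M_def \<gamma>_def by simp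
      have "(a/b) powr \<gamma> < 1 powr \<gamma>"
        using a0 bp gp by (intro powr_less_mono2) auto
      hence ag1: "(a/b) powr \<gamma> < 1" by simp
      have Dp: "M * (1 - (a/b) powr \<gamma>) > 0" using ag1 Mp by simp
      show "\<bar>(Irho \<rho> b - Irho \<rho> a) /
              (Lrho \<alpha> \<rho> b * (b powr (1 - \<alpha>) - a powr (1 - \<alpha>))) - 1 / (1 - \<alpha>)\<bar> \<le> \<epsilon>"
      proof (cases "x0 \<le> a")
        case True
        have l1: "M * (1 - (a/b) powr \<gamma>) / (\<gamma>+\<eta>) \<le> Irho \<rho> b - Irho \<rho> a"
          using est_a(1)[OF reg eta(1) _ x0 inc dec True a0(2)] eta gp
          unfolding M_def \<gamma>_def by (simp add: algebra_simps)
        have l2: "Irho \<rho> b - Irho \<rho> a \<le> M * (1 - (a/b) powr \<gamma>) / (\<gamma>-\<eta>)"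
          using est_a(2)[OF reg eta(1) _ x0 inc dec True a0(2)] eta gp
          unfolding M_def \<gamma>_def by (simp add: algebra_simps)
        show ?thesis unfolding \<gamma>_def[symmetric] De
          by (rule ratio_bound[OF Dp l1 l2]) (use eta gp ep in auto)
      next
        case False
        hence ax: "a < x0" by simp
        define N1 where "N1 = Irho \<rho> b - Irho \<rho> x0"
        define E where "E = Irho \<rho> x0 - Irho \<rho> a"
        have NE: "Irho \<rho> b - Irho \<rho> a = N1 + E" unfolding N1_def E_def by simp
        have Eint: "E = integral {a..x0} \<rho>" and Ei: "\<rho> integrable_on {a..x0}"
          using Irho_diff[OF reg a0(1), of x0] ax unfolding E_def by auto
        have rpos: "\<forall>s\<in>{a..x0}. 0 \<le> \<rho> s \<and> \<rho> s \<le> 1" 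
        proof
          fix s assume "s \<in> {a..x0}"
          hence "s \<ge> 0" using a0 by auto
          thus "0 \<le> \<rho> s \<and> \<rho> s \<le> 1" using reg unfolding regvar_def by (meson less_imp_le)
        qed
        have E0: "0 \<le> E" unfolding Eint using rpos by (intro integral_nonneg[OF Ei]) auto
        have "integral {a..x0} \<rho> \<le> integral {a..x0} (\<lambda>s. 1::real)"
          using rpos by (intro integral_le[OF Ei]) auto
        hence Ex: "E \<le> x0" unfolding Eint using ax a0 by simp
        have n1: "M * (1 - t) / (\<gamma>+\<eta>) \<le> N1"
          using est_a(1)[OF reg eta(1) _ x0 inc dec order_refl bx] eta gp
          unfolding M_def \<gamma>_def t_def N1_def by (simp add: algebra_simps)
        have n2: "N1 \<le> D1 / (\<gamma>-\<eta>)"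
          using est_a(2)[OF reg eta(1) _ x0 inc dec order_refl bx] eta gp
          unfolding M_def \<gamma>_def t_def N1_def D1_def by (simp add: algebra_simps)
        have "0 \<le> M*(1-t)/(\<gamma>+\<eta>)" using Mp tb eta gp by (intro divide_nonneg_pos mult_nonneg_nonneg) auto
        hence N10: "0 \<le> N1" using n1 by linarith
        have atx: "(a/b) powr \<gamma> \<le> t" unfolding t_def using a0 ax bp gp
          by (intro powr_mono2) (auto simp: divide_right_mono)
        have DaD1: "D1 \<le> M * (1 - (a/b) powr \<gamma>)" unfolding D1_def using atx Mp
          by (intro mult_left_mono) auto
        have DaM: "M * (1 - (a/b) powr \<gamma>) \<le> M" using Mp by simp
        have up: "(N1+E)/(M * (1 - (a/b) powr \<gamma>)) \<le> 1/(\<gamma>-\<eta>) + x0/D1"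
          by (rule small_upper[OF D1p DaD1 N10 E0 Ex n2]) (use eta in auto)
        have lo: "(1-t)/(\<gamma>+\<eta>) \<le> (N1+E)/(M * (1 - (a/b) powr \<gamma>))"
          by (rule small_lower[OF Mp Dp DaM E0 n1 _ N10]) (use eta gp in auto)
        have "t/(\<gamma>+\<eta>) \<le> \<epsilon>/2" using tb(2) eta gp by (simp add: field_simps)
        hence lo2: "1/\<gamma> - \<epsilon> \<le> (1-t)/(\<gamma>+\<eta>)" using eta(4) by (simp add: diff_divide_distrib)
        have "1/(\<gamma>-\<eta>) + x0/D1 \<le> 1/\<gamma> + \<epsilon>" using xD eta(3) by linarith
        hence "\<bar>(N1+E)/(M * (1 - (a/b) powr \<gamma>)) - 1/\<gamma>\<bar> \<le> \<epsilon>"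
          using up lo lo2 by (simp only: abs_le_iff) linarith
        thus ?thesis unfolding \<gamma>_def[symmetric] De NE .
      qed
    qed
    moreover have "{0..<b} \<noteq> {}" using bp by simp
    ultimately show ?case by blast
  qed
qed simp


theorem lemma2p8:
  fixes \<alpha> :: real and \<rho> :: "real \<Rightarrow> real"
  assumes "\<alpha> \<ge> 0" and "regvar \<alpha> \<rho>"
    and "\<forall>\<eta>>0. ev_incr (\<lambda>x. x powr \<eta> * Lrho \<alpha> \<rho> x) \<and> ev_decr (\<lambda>x. x powr (-\<eta>) * Lrho \<alpha> \<rho> x)"
  shows "(\<alpha> < 1 \<longrightarrow> ((\<lambda>b. SUP a\<in>{0..<b}. ereal \<bar>(Irho \<rho> b - Irho \<rho> a) /
              (Lrho \<alpha> \<rho> b * (b powr (1 - \<alpha>) - a powr (1 - \<alpha>))) - 1 / (1 - \<alpha>)\<bar>) \<longlongrightarrow> 0) at_top) \<and>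
    (\<alpha> > 1 \<longrightarrow> ((\<lambda>b. SUP a\<in>{b<..}. ereal \<bar>(Irho \<rho> a - Irho \<rho> b) /
              (Lrho \<alpha> \<rho> b * (b powr (1 - \<alpha>) - a powr (1 - \<alpha>))) - 1 / (\<alpha> - 1)\<bar>) \<longlongrightarrow> 0) at_top)"
  using part_a[OF assms(1) _ assms(2,3)] part_b[OF _ assms(2,3)] by blast

end
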